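(* Consider the following controlled single-server queue. Packets arrive according to a Poisson process of rate $\lambda>0$ to a finite buffer of capacity $B\ge 2$ packets (including the packet currently being transmitted); packets arriving when the buffer is full are discarded. Packets are transmitted one at a time. Each transmission is carried out over one of two paths (operating points) $u\in\{a,b\}$: a transmission over path $u$ lasts an exponentially distributed time with rate $\mu_u$ (independent of everything else), and at its completion the packet is successfully delivered with probability $1-p_u$ and lost with probability $p_u$, where $0<\mu_a<\mu_b$ and $p_a<p_b$. A decision maker chooses the path for each transmission at the decision epochs, namely immediately after a transmission completion that leaves $n$ packets in the system, $n\in\{0,1,\ldots,B-1\}$ (if $n\ge 1$ the chosen transmission starts immediately; if $n=0$ it starts at the next arrival). Each successful delivery completed at time $\sigma$ yields reward $e^{-\gamma\sigma}$, where $\gamma>0$ is a discount rate, and the objective is to maximize the expected total discounted reward. Then this problem (formulated as a Markov decision process over the states at departures and arrivals) is solved by an optimal policy of threshold type: there exists a unique threshold $t$, $0\le t\le B$, such that the optimal policy transmits via path $a$ at all decision states with $n\le t$ and via path $b$ otherwise.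
   Context: Path $a$ is the more reliable, lower-rate operating point and path $b$ the less reliable, higher-rate operating point of the physical layer. The state at a decision epoch is the number $n$ of packets left in the system after the last transmission completion. A policy assigns to each such state $n$ an action in $\{a,b\}$. *)

theory Defs
  imports "HOL-Analysis.Analysis"
begin

text \<open>Decision states: n \<in> {0..<B} packets left after a transmission completion.\<close>

datatype path = PathA | PathB

text \<open>Discounted probability that exactly k Poisson(lam) arrivals occur during a
  transmission of length S ~ Exp(mu):  E[ exp(-gam S) ; A(S) = k ].\<close>
definition disc_arr_weight :: "real \<Rightarrow> real \<Rightarrow> real \<Rightarrow> nat \<Rightarrow> real" where
  "disc_arr_weight lam gam mu k =
     integral {0..} (\<lambda>s. mu * exp (- mu * s) * (exp (- lam * s) * (lam * s) ^ k / fact k)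
                          * exp (- gam * s))"

text \<open>Discounted transition weight: a transmission starting with m packets in
  the system (1 \<le> m \<le> B) ends leaving j packets; arrivals beyond capacity
  B are discarded, so j = min (m + k) B - 1 when k packets arrive.\<close>
definition trans_weight :: "real \<Rightarrow> real \<Rightarrow> real \<Rightarrow> nat \<Rightarrow> nat \<Rightarrow> nat \<Rightarrow> real" where
  "trans_weight lam gam mu B m j =
     (\<Sum>k. if min (m + k) B - 1 = j then disc_arr_weight lam gam mu k else 0)"

text \<open>Expected discounted reward of one transmission over a path with rate mu and
  loss probability p: E[ exp(-gam S) ] * (1 - p).\<close>
definition trans_reward :: "real \<Rightarrow> real \<Rightarrow> real \<Rightarrow> real" where
  "trans_reward gam mu p = (1 - p) * integral {0..} (\<lambda>s. mu * exp (- mu * s) * exp (- gam * s))"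

text \<open>Discount factor of an idle period (waiting for the next arrival in state 0).\<close>
definition idle_disc :: "real \<Rightarrow> real \<Rightarrow> real" where
  "idle_disc lam gam = integral {0..} (\<lambda>s. lam * exp (- lam * s) * exp (- gam * s))"

definition bellman_pol ::
  "real \<Rightarrow> real \<Rightarrow> (path \<Rightarrow> real) \<Rightarrow> (path \<Rightarrow> real) \<Rightarrow> nat \<Rightarrow> (nat \<Rightarrow> path)
     \<Rightarrow> (nat \<Rightarrow> real) \<Rightarrow> nat \<Rightarrow> real" where
  "bellman_pol lam gam mu p B pol V n =
     (let m = (if n = 0 then 1 else n);
          d = (if n = 0 then idle_disc lam gam else 1);
          u = pol n
      in d * (trans_reward gam (mu u) (p u) + (\<Sum>j<B. trans_weight lam gam (mu u) B m j * V j)))"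

text \<open>Expected total discounted reward of policy pol from decision state n:
  limit of the expected discounted reward collected during the first k transmissions.\<close>
definition policy_value ::
  "real \<Rightarrow> real \<Rightarrow> (path \<Rightarrow> real) \<Rightarrow> (path \<Rightarrow> real) \<Rightarrow> nat \<Rightarrow> (nat \<Rightarrow> path) \<Rightarrow> nat \<Rightarrow> real" where
  "policy_value lam gam mu p B pol n =
     lim (\<lambda>k. ((bellman_pol lam gam mu p B pol) ^^ k) (\<lambda>_. 0) n)"

definition optimal_policy ::
  "real \<Rightarrow> real \<Rightarrow> (path \<Rightarrow> real) \<Rightarrow> (path \<Rightarrow> real) \<Rightarrow> nat \<Rightarrow> (nat \<Rightarrow> path) \<Rightarrow> bool" where
  "optimal_policy lam gam mu p B pol =
     (\<forall>pol'. \<forall>n<B. policy_value lam gam mu p B pol' n \<le> policy_value lam gam mu p B pol n)"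

end

theory Submission
  imports Defs "HOL-Probability.Distributions"
begin


lemma small_le0:
  fixes x K \<rho> :: real
  assumes "0 \<le> \<rho>" "\<rho> < 1" "\<And>k. x \<le> K * \<rho> ^ k"
  shows "x \<le> 0"
proof -
  have "(\<lambda>k. K * \<rho> ^ k) \<longlonglongrightarrow> K * 0"
    by (intro tendsto_mult tendsto_const LIMSEQ_power_zero) (use assms in auto)
  thus ?thesis using assms(3) by (intro LIMSEQ_le_const[of "\<lambda>k. K * \<rho> ^ k"]) auto
qed

lemma contr_abs:
  fixes F :: "(nat \<Rightarrow> real) \<Rightarrow> nat \<Rightarrow> real"
  assumes contr: "\<And>V W c. (\<forall>j<B. V j - W j \<le> c) \<Longrightarrow> 0 \<le> c \<Longrightarrow> (\<forall>n<B. F V n - F W n \<le> \<rho> * c)"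
    and "\<forall>j<B. \<bar>V j - W j\<bar> \<le> c" "n < B" "0 \<le> c"
  shows "\<bar>F V n - F W n\<bar> \<le> \<rho> * c"
proof -
  have "F V n - F W n \<le> \<rho> * c" using contr[of V W c] assms(2-4) by (auto simp: abs_le_iff)
  moreover have "F W n - F V n \<le> \<rho> * c" using contr[of W V c] assms(2-4) by (auto simp: abs_le_iff)
  ultimately show ?thesis by (simp add: abs_le_iff)
qed

lemma contraction_fix:
  fixes F :: "(nat \<Rightarrow> real) \<Rightarrow> nat \<Rightarrow> real"
  assumes rho: "0 \<le> \<rho>" "\<rho> < 1"
    and contr: "\<And>V W c. (\<forall>j<B. V j - W j \<le> c) \<Longrightarrow> 0 \<le> c \<Longrightarrow> (\<forall>n<B. F V n - F W n \<le> \<rho> * c)"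
  shows "\<exists>L. (\<forall>n<B. (\<lambda>k. (F ^^ k) (\<lambda>_. 0) n) \<longlonglongrightarrow> L n) \<and> (\<forall>n<B. F L n = L n)"
proof -
  define X where "X k = (F ^^ k) (\<lambda>_. 0)" for k
  have XS: "X (Suc k) = F (X k)" for k by (simp add: X_def)
  define C where "C = (\<Sum>j<B. \<bar>X 1 j - X 0 j\<bar>)"
  have C0: "0 \<le> C" by (simp add: C_def sum_nonneg)
  have step: "\<forall>n<B. \<bar>X (Suc k) n - X k n\<bar> \<le> \<rho> ^ k * C" for k
  proof (induction k)
    case 0
    show ?case unfolding C_def
      by (auto intro!: member_le_sum[where f = "\<lambda>j. \<bar>X 1 j - X 0 j\<bar>", simplified])
  next
    case (Suc k)
    have "0 \<le> \<rho> ^ k * C" using rho C0 by simp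
    have "\<bar>F (X (Suc k)) n - F (X k) n\<bar> \<le> \<rho> * (\<rho> ^ k * C)" if "n < B" for n
      by (rule contr_abs[where F=F and B=B]) (use contr Suc.IH that \<open>0 \<le> \<rho> ^ k * C\<close> in auto)
    thus ?case by (auto simp: XS[of "Suc k"] XS[of k] mult.assoc)
  qed
  define d where "d n i = X (Suc i) n - X i n" for n i
  have geo: "summable (\<lambda>i. C * \<rho> ^ i)" using rho by (intro summable_mult summable_geometric) auto
  have dsum: "summable (d n)" if "n < B" for n
    by (rule summable_comparison_test[OF _ geo]) (use step that in \<open>auto simp: d_def mult.commute\<close>)
  define L where "L n = suminf (d n)" for n
  have X0: "X 0 n = 0" for n by (simp add: X_def)
  have Xsum: "X k n = (\<Sum>i<k. d n i)" for k n
    using sum_lessThan_telescope[of "\<lambda>i. X i n" k] by (simp add: d_def X0)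
  have conv: "(\<lambda>k. X k n) \<longlonglongrightarrow> L n" if "n < B" for n
    unfolding Xsum L_def using summable_LIMSEQ[OF dsum[OF that]] .
  have tail: "\<bar>L n - X k n\<bar> \<le> C / (1 - \<rho>) * \<rho> ^ k" if "n < B" for n k
  proof -
    have s: "summable (\<lambda>i. d n (i + k))" using dsum[OF that] by (simp add: summable_iff_shift)
    have "L n = (\<Sum>i. d n (i + k)) + (\<Sum>i<k. d n i)"
      unfolding L_def by (rule suminf_split_initial_segment[OF dsum[OF that]])
    hence e: "L n - X k n = (\<Sum>i. d n (i + k))" by (simp add: Xsum)
    have g2: "summable (\<lambda>i. C * \<rho> ^ k * \<rho> ^ i)" using rho by (intro summable_mult summable_geometric) auto
    have gs: "(\<Sum>i. C * \<rho> ^ k * \<rho> ^ i) = C / (1 - \<rho>) * \<rho> ^ k"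
      using rho by (subst suminf_mult) (auto simp: suminf_geometric)
    have b: "\<bar>d n (i + k)\<bar> \<le> C * \<rho> ^ k * \<rho> ^ i" for i
      using step[of "i + k"] that by (simp add: d_def power_add mult_ac)
    have "(\<Sum>i. d n (i + k)) \<le> (\<Sum>i. C * \<rho> ^ k * \<rho> ^ i)"
      using b by (intro suminf_le s g2) (auto simp: abs_le_iff)
    moreover have "- (\<Sum>i. C * \<rho> ^ k * \<rho> ^ i) \<le> (\<Sum>i. d n (i + k))"
    proof -
      have "(\<Sum>i. - (C * \<rho> ^ k * \<rho> ^ i)) \<le> (\<Sum>i. d n (i + k))"
        using b by (intro suminf_le s summable_minus g2) (smt (verit))
      thus ?thesis by (simp add: suminf_minus[OF g2])
    qed
    ultimately show ?thesis using e gs by (simp add: abs_le_iff)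
  qed
  have fixp: "F L n = L n" if "n < B" for n
  proof -
    have "\<bar>F L n - L n\<bar> - (2 * C / (1 - \<rho>)) * \<rho> ^ k \<le> 0" for k
    proof -
      have "\<bar>F L n - F (X k) n\<bar> \<le> \<rho> * (C / (1 - \<rho>) * \<rho> ^ k)"
        by (rule contr_abs[where F=F and B=B]) (use contr rho C0 tail that in auto)
      also have "\<dots> \<le> C / (1 - \<rho>) * \<rho> ^ k"
        using rho C0 by (intro mult_left_le_one_le) auto
      finally have a: "\<bar>F L n - X (Suc k) n\<bar> \<le> C / (1 - \<rho>) * \<rho> ^ k" by (simp add: XS)
      have b: "\<bar>L n - X (Suc k) n\<bar> \<le> C / (1 - \<rho>) * \<rho> ^ k"
      proof -
        have "\<bar>L n - X (Suc k) n\<bar> \<le> C / (1 - \<rho>) * \<rho> ^ Suc k" using tail that by blast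
        also have "\<dots> \<le> C / (1 - \<rho>) * \<rho> ^ k"
          using rho C0 by (intro mult_left_mono power_decreasing) auto
        finally show ?thesis .
      qed
      show ?thesis using a b by (simp add: abs_le_iff)
    qed
    hence "\<bar>F L n - L n\<bar> \<le> 0"
      using rho by (intro small_le0[of \<rho> _ "2 * C / (1 - \<rho>)"]) (auto simp: algebra_simps)
    thus ?thesis by simp
  qed
  show ?thesis using conv fixp unfolding X_def by blast
qed

lemma contraction_cmp:
  fixes F :: "(nat \<Rightarrow> real) \<Rightarrow> nat \<Rightarrow> real"
  assumes rho: "0 \<le> \<rho>" "\<rho> < 1"
    and contr: "\<And>V W c. (\<forall>j<B. V j - W j \<le> c) \<Longrightarrow> 0 \<le> c \<Longrightarrow> (\<forall>n<B. F V n - F W n \<le> \<rho> * c)"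
    and L: "\<forall>n<B. F L n = L n" and V: "\<forall>n<B. F V n \<le> V n"
  shows "\<forall>n<B. L n \<le> V n"
proof -
  define C where "C = (\<Sum>j<B. \<bar>L j - V j\<bar>)"
  have C0: "0 \<le> C" by (simp add: C_def sum_nonneg)
  have "\<forall>n<B. L n - V n \<le> C * \<rho> ^ k" for k
  proof (induction k)
    case 0
    show ?case unfolding C_def
      by (auto intro!: order.trans[OF abs_ge_self member_le_sum[where f = "\<lambda>j. \<bar>L j - V j\<bar>", simplified]])
  next
    case (Suc k)
    have "0 \<le> C * \<rho> ^ k" using rho C0 by simp
    from contr[OF Suc.IH this] have "\<forall>n<B. F L n - F V n \<le> \<rho> * (C * \<rho> ^ k)" .
    thus ?case using L V by (force simp: mult_ac)
  qed
  thus ?thesis using small_le0[OF rho] by (metis diff_le_0_iff_le)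
qed

lemma contraction_uniq:
  fixes F :: "(nat \<Rightarrow> real) \<Rightarrow> nat \<Rightarrow> real"
  assumes rho: "0 \<le> \<rho>" "\<rho> < 1"
    and contr: "\<And>V W c. (\<forall>j<B. V j - W j \<le> c) \<Longrightarrow> 0 \<le> c \<Longrightarrow> (\<forall>n<B. F V n - F W n \<le> \<rho> * c)"
    and L: "\<forall>n<B. F L n = L n" and V: "\<forall>n<B. F V n = V n"
  shows "\<forall>n<B. L n = V n"
proof -
  have a: "\<forall>n<B. L n \<le> V n"
    by (rule contraction_cmp[where F=F and \<rho>=\<rho> and B=B]) (use assms in auto)
  have b: "\<forall>n<B. V n \<le> L n"
    by (rule contraction_cmp[where F=F and \<rho>=\<rho> and B=B]) (use assms in auto)
  show ?thesis using a b by (meson order.antisym)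
qed




lemma dw_closed:
  assumes "mu + lam + gam > 0"
  shows "disc_arr_weight lam gam mu k = mu * lam^k / (mu+lam+gam)^(Suc k)"
proof -
  define c where "c = mu+lam+gam"
  have c: "c > 0" using assms by (simp add: c_def)
  have e1: "((\<lambda>x. c^(Suc k) * x^k * exp (- c * x) / fact k) has_integral 1) {0..}"
  proof -
    have "(\<integral>\<^sup>+ x. ennreal (erlang_density k c x * x ^ 0) \<partial>lborel) = fact (k + 0) / (fact k * c ^ 0)"
      using nn_integral_erlang_ith_moment[OF c] by blast
    hence "(\<integral>\<^sup>+ x. ennreal (erlang_density k c x) \<partial>lborel) = ennreal 1" by simp
    hence "(erlang_density k c has_integral 1) UNIV"
      using c by (intro nn_integral_has_integral) auto
    hence "((\<lambda>x. if x \<in> {0..} then c^(Suc k) * x^k * exp (- c * x) / fact k else 0) has_integral 1) UNIV"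
      by (rule has_integral_eq[rotated]) (auto simp: erlang_density_def)
    thus ?thesis by (simp only: has_integral_restrict_UNIV)
  qed
  have "((\<lambda>x. (mu * lam^k / c^(Suc k)) * (c^(Suc k) * x^k * exp (- c * x) / fact k)) has_integral
         (mu * lam^k / c^(Suc k)) * 1) {0..}"
    by (intro has_integral_mult_right e1)
  moreover have "(mu * lam^k / c^(Suc k)) * (c^(Suc k) * x^k * exp (- c * x) / fact k) =
     mu * exp (- mu * x) * (exp (- lam * x) * (lam * x) ^ k / fact k) * exp (- gam * x)" for x
  proof -
    have "exp (- c * x) = exp (- mu * x) * exp (- lam * x) * exp (- gam * x)"
      by (simp add: c_def algebra_simps flip: exp_add)
    thus ?thesis using c by (simp add: power_mult_distrib field_simps)
  qed
  ultimately have "((\<lambda>x. mu * exp (- mu * x) * (exp (- lam * x) * (lam * x) ^ k / fact k) * exp (- gam * x)) has_integral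
         (mu * lam^k / c^(Suc k)) * 1) {0..}"
    by (metis (no_types, lifting) has_integral_cong)
  hence "disc_arr_weight lam gam mu k = (mu * lam^k / c^(Suc k)) * 1"
    unfolding disc_arr_weight_def by (rule integral_unique)
  thus ?thesis by (simp add: c_def)
qed

lemma trans_reward_closed:
  assumes "mu + gam > 0"
  shows "trans_reward gam mu p = (1 - p) * (mu / (mu + gam))"
proof -
  have "integral {0..} (\<lambda>s. mu * exp (- mu * s) * exp (- gam * s)) = disc_arr_weight 0 gam mu 0"
    unfolding disc_arr_weight_def by simp
  thus ?thesis unfolding trans_reward_def using dw_closed[of mu 0 gam 0] assms by simp
qed

lemma idle_disc_closed:
  assumes "lam + gam > 0"
  shows "idle_disc lam gam = lam / (lam + gam)"
proof -
  have "integral {0..} (\<lambda>s. lam * exp (- lam * s) * exp (- gam * s)) = disc_arr_weight 0 gam lam 0"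
    unfolding disc_arr_weight_def by simp
  thus ?thesis unfolding idle_disc_def using dw_closed[of lam 0 gam 0] assms by simp
qed

lemma exists_min_idx:
  fixes f :: "nat \<Rightarrow> real"
  assumes "0 < N"
  shows "\<exists>n0<N. \<forall>j<N. f n0 \<le> f j"
proof -
  have fin: "finite (f ` {..<N})" and ne: "f ` {..<N} \<noteq> {}" using assms by auto
  obtain n0 where "n0 < N" "f n0 = Min (f ` {..<N})" using Min_in[OF fin ne] by auto
  thus ?thesis using Min_le[OF fin] by auto
qed

lemma abel_sum:
  fixes f x :: "nat \<Rightarrow> real"
  shows "(\<Sum>k<K. f k * x k) = (\<Sum>k<K. (\<Sum>i<Suc k. f i) * (x k - x (Suc k))) + (\<Sum>i<K. f i) * x K"
  by (induction K) (simp_all add: algebra_simps)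

locale qsetting =
  fixes lam gam :: real and mu p :: "path \<Rightarrow> real" and B :: nat
  assumes lam: "lam > 0" and gam: "gam > 0" and B2: "B \<ge> 2"
    and muA: "0 < mu PathA" and muAB: "mu PathA < mu PathB"
    and pA: "0 \<le> p PathA" and pAB: "p PathA < p PathB" and pB: "p PathB \<le> 1"
begin

lemma mu_pos: "0 < mu u" using muA muAB by (cases u) auto
lemma p_le1: "p u \<le> 1" using pAB pB by (cases u) auto
lemma B1: "1 \<le> B" using B2 by simp

definition cc :: "path \<Rightarrow> real" where "cc u = mu u + lam + gam"
definition qq :: "path \<Rightarrow> real" where "qq u = lam / cc u"
definition bet :: "path \<Rightarrow> real" where "bet u = mu u / (mu u + gam)"
definition w :: "path \<Rightarrow> nat \<Rightarrow> real" where "w u k = disc_arr_weight lam gam (mu u) k"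
definition r :: "path \<Rightarrow> real" where "r u = trans_reward gam (mu u) (p u)"
definition dd :: "nat \<Rightarrow> real" where "dd n = (if n = 0 then idle_disc lam gam else 1)"
definition mm :: "nat \<Rightarrow> nat" where "mm n = (if n = 0 then 1 else n)"
definition G :: "path \<Rightarrow> (nat \<Rightarrow> real) \<Rightarrow> nat \<Rightarrow> real" where
  "G u V m = (\<Sum>k. w u k * V (min (m + k) B - 1))"
definition Q :: "path \<Rightarrow> (nat \<Rightarrow> real) \<Rightarrow> nat \<Rightarrow> real" where
  "Q u V n = r u + G u V (mm n)"

lemma cc_pos: "0 < cc u" using mu_pos[of u] lam gam by (simp add: cc_def)
lemma qq: "0 < qq u" "qq u < 1" using mu_pos[of u] lam gam cc_pos[of u] by (auto simp: qq_def cc_def)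
lemma w_eq: "w u k = (mu u / cc u) * qq u ^ k"
  using dw_closed[of "mu u" lam gam k] cc_pos[of u] by (simp add: w_def cc_def qq_def power_divide)
lemma w_nonneg: "0 \<le> w u k" using mu_pos[of u] cc_pos[of u] qq[of u] by (simp add: w_eq)
lemma w_sums: "w u sums bet u"
proof -
  have "(\<lambda>k. (mu u / cc u) * qq u ^ k) sums ((mu u / cc u) * (1 / (1 - qq u)))"
    using qq[of u] by (intro sums_mult geometric_sums) auto
  moreover have "(mu u / cc u) * (1 / (1 - qq u)) = bet u"
  proof -
    have "1 - qq u = (mu u + gam) / cc u" using cc_pos[of u] by (simp add: qq_def cc_def field_simps)
    thus ?thesis using cc_pos[of u] gam mu_pos[of u] by (simp add: bet_def)
  qed
  ultimately show ?thesis by (simp add: w_eq[abs_def])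
qed
lemma w_summable: "summable (w u)" using w_sums by (rule sums_summable)
lemma w_suminf: "suminf (w u) = bet u" using w_sums by (rule sums_unique[symmetric])
lemma bet: "0 < bet u" "bet u < 1" using mu_pos[of u] gam by (auto simp: bet_def)
lemma betAB: "bet PathA \<le> bet PathB"
  using muA muAB gam by (simp add: bet_def field_simps)
lemma bet_leB: "bet u \<le> bet PathB" using betAB by (cases u) auto
lemma r_eq: "r u = (1 - p u) * bet u"
  using trans_reward_closed[of "mu u" gam "p u"] mu_pos[of u] gam by (simp add: r_def bet_def)
lemma r_nonneg: "0 \<le> r u" using r_eq bet[of u] p_le1[of u] by simp
definition d0 where "d0 = lam / (lam + gam)"
lemma dd0: "dd 0 = d0" using idle_disc_closed[of lam gam] lam gam by (simp add: dd_def d0_def)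
lemma d0: "0 < d0" "d0 < 1" using lam gam by (auto simp: d0_def)
lemma dd_eq: "dd n = (if n = 0 then d0 else 1)" using dd0 by (simp add: dd_def)
lemma dd: "0 < dd n" "dd n \<le> 1" using d0 by (auto simp: dd_eq)

lemma wsum_summable:
  assumes "\<And>k. \<bar>X k\<bar> \<le> M"
  shows "summable (\<lambda>k. w u k * X k)"
proof (rule summable_comparison_test[OF _ summable_mult2[where c=M, OF w_summable]])
  show "\<exists>N. \<forall>n\<ge>N. norm (w u n * X n) \<le> w u n * M"
    using assms w_nonneg by (auto simp: abs_mult intro!: mult_left_mono)
qed

lemma wsum_le:
  assumes "\<And>k. X k \<le> Y k" "\<And>k. \<bar>X k\<bar> \<le> M" "\<And>k. \<bar>Y k\<bar> \<le> M"
  shows "(\<Sum>k. w u k * X k) \<le> (\<Sum>k. w u k * Y k)"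
  using assms w_nonneg by (intro suminf_le wsum_summable mult_left_mono) auto

lemma wsum_const: "(\<Sum>k. w u k * c) = bet u * c"
  using suminf_mult2[OF w_summable, of u c, symmetric] w_suminf by simp

lemma idx_bound: "\<bar>(V::nat\<Rightarrow>real) (min x B - 1)\<bar> \<le> (\<Sum>j<B. \<bar>V j\<bar>)"
  using B1 by (intro member_le_sum[where f = "\<lambda>j. \<bar>V j\<bar>", simplified]) auto

lemma G_summable: "summable (\<lambda>k. w u k * V (min (m + k) B - 1))"
  by (rule wsum_summable[OF idx_bound])

lemma sum_tw:
  assumes "1 \<le> m"
  shows "(\<Sum>j<B. trans_weight lam gam (mu u) B m j * V j) = G u V m"
proof -
  define f where "f j k = (if min (m + k) B - 1 = j then w u k else 0) * V j" for j k
  have sf: "summable (f j)" for j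
  proof -
    have "summable (\<lambda>k. w u k * ((if min (m + k) B - 1 = j then 1 else 0) * V j))"
      by (rule wsum_summable[where M="\<bar>V j\<bar>"]) auto
    moreover have "f j = (\<lambda>k. w u k * ((if min (m + k) B - 1 = j then 1 else 0) * V j))"
      by (auto simp: f_def fun_eq_iff)
    ultimately show ?thesis by simp
  qed
  have "trans_weight lam gam (mu u) B m j * V j = suminf (f j)" for j
  proof -
    have "summable (\<lambda>k. if min (m + k) B - 1 = j then w u k else 0)"
      by (rule summable_comparison_test[OF _ w_summable]) (auto simp: w_nonneg)
    thus ?thesis unfolding trans_weight_def f_def w_def[symmetric] by (simp add: suminf_mult2)
  qed
  hence "(\<Sum>j<B. trans_weight lam gam (mu u) B m j * V j) = (\<Sum>j<B. suminf (f j))" by simp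
  also have "\<dots> = (\<Sum>k. \<Sum>j<B. f j k)" using sf by (simp add: suminf_sum)
  also have "(\<lambda>k. \<Sum>j<B. f j k) = (\<lambda>k. w u k * V (min (m + k) B - 1))"
  proof
    fix k
    have "min (m + k) B - 1 < B" using B1 by simp
    have "(\<Sum>j<B. f j k) = (\<Sum>j\<in>{..<B}. if j = min (m + k) B - 1 then w u k * V (min (m + k) B - 1) else 0)"
      by (rule sum.cong) (auto simp: f_def)
    also have "\<dots> = w u k * V (min (m + k) B - 1)" using \<open>min (m + k) B - 1 < B\<close> by (subst sum.delta) auto
    finally show "(\<Sum>j<B. f j k) = w u k * V (min (m + k) B - 1)" .
  qed
  finally show ?thesis by (simp add: G_def)
qed

lemma bp_eq: "bellman_pol lam gam mu p B pol V n = dd n * Q (pol n) V n"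
  unfolding bellman_pol_def Let_def Q_def r_def dd_def mm_def
  by (simp add: sum_tw)

lemma G_diff_le:
  assumes "\<forall>j<B. V j - W j \<le> c"
  shows "G u V m - G u W m \<le> bet u * c"
proof -
  have "G u V m - G u W m = (\<Sum>k. w u k * (V (min (m + k) B - 1) - W (min (m + k) B - 1)))"
    unfolding G_def suminf_diff[OF G_summable G_summable] by (simp add: right_diff_distrib)
  also have "\<dots> \<le> (\<Sum>k. w u k * c)"
  proof (rule wsum_le)
    show "V (min (m + k) B - 1) - W (min (m + k) B - 1) \<le> c" for k
      using assms B1 by simp
    show "\<bar>V (min (m + k) B - 1) - W (min (m + k) B - 1)\<bar> \<le> (\<Sum>j<B. \<bar>V j\<bar>) + (\<Sum>j<B. \<bar>W j\<bar>) + \<bar>c\<bar>" for k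
      using idx_bound[of V "m+k"] idx_bound[of W "m+k"] by linarith
    show "\<bar>c\<bar> \<le> (\<Sum>j<B. \<bar>V j\<bar>) + (\<Sum>j<B. \<bar>W j\<bar>) + \<bar>c\<bar>"
      by (simp add: sum_nonneg add_nonneg_nonneg)
  qed
  also have "\<dots> = bet u * c" by (rule wsum_const)
  finally show ?thesis .
qed

lemma bp_contr:
  assumes "\<forall>j<B. V j - W j \<le> c" "0 \<le> c"
  shows "\<forall>n<B. bellman_pol lam gam mu p B pol V n - bellman_pol lam gam mu p B pol W n \<le> bet PathB * c"
proof (intro allI impI)
  fix n
  have "bellman_pol lam gam mu p B pol V n - bellman_pol lam gam mu p B pol W n
        = dd n * (G (pol n) V (mm n) - G (pol n) W (mm n))"
    by (simp add: bp_eq Q_def algebra_simps)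
  also have "\<dots> \<le> bet PathB * c"
  proof -
    have X: "G (pol n) V (mm n) - G (pol n) W (mm n) \<le> bet PathB * c"
      using G_diff_le[OF assms(1)] bet_leB[of "pol n"] assms(2) by (meson mult_right_mono order_trans)
    have c0: "0 \<le> bet PathB * c" using bet[of PathB] assms(2) by simp
    show ?thesis
    proof (cases "G (pol n) V (mm n) - G (pol n) W (mm n) \<le> 0")
      case True thus ?thesis using dd[of n] c0 by (meson mult_nonneg_nonpos order_trans less_imp_le)
    next
      case False
      hence "dd n * (G (pol n) V (mm n) - G (pol n) W (mm n)) \<le> G (pol n) V (mm n) - G (pol n) W (mm n)"
        using dd[of n] by (intro mult_left_le_one_le) auto
      thus ?thesis using X by linarith
    qed
  qed
  finally show "bellman_pol lam gam mu p B pol V n - bellman_pol lam gam mu p B pol W n \<le> bet PathB * c" by simp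
qed

end



context qsetting begin

lemma mult_dd_le: "X \<le> y \<Longrightarrow> 0 \<le> y \<Longrightarrow> dd n * X \<le> y"
proof (cases "X \<le> 0")
  case True
  assume "0 \<le> y"
  thus ?thesis using True dd[of n] by (meson mult_nonneg_nonpos order_trans less_imp_le)
next
  case False
  assume "X \<le> y"
  have "dd n * X \<le> X" using False dd[of n] by (intro mult_left_le_one_le) auto
  thus ?thesis using \<open>X \<le> y\<close> by linarith
qed

definition Tm :: "(nat \<Rightarrow> real) \<Rightarrow> nat \<Rightarrow> real" where
  "Tm V n = dd n * max (Q PathA V n) (Q PathB V n)"

lemma Q_diff_le:
  assumes "\<forall>j<B. V j - W j \<le> c" "0 \<le> c"
  shows "Q u V n - Q u W n \<le> bet PathB * c"
proof -
  have "Q u V n - Q u W n = G u V (mm n) - G u W (mm n)" by (simp add: Q_def)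
  also have "\<dots> \<le> bet u * c" by (rule G_diff_le[OF assms(1)])
  also have "\<dots> \<le> bet PathB * c" using bet_leB[of u] assms(2) by (rule mult_right_mono)
  finally show ?thesis .
qed

lemma Tm_contr:
  assumes "\<forall>j<B. V j - W j \<le> c" "0 \<le> c"
  shows "\<forall>n<B. Tm V n - Tm W n \<le> bet PathB * c"
proof (intro allI impI)
  fix n
  have a: "Q PathA V n - Q PathA W n \<le> bet PathB * c" "Q PathB V n - Q PathB W n \<le> bet PathB * c"
    using Q_diff_le[OF assms] by auto
  have "max (Q PathA V n) (Q PathB V n) - max (Q PathA W n) (Q PathB W n) \<le> bet PathB * c"
    using a by (simp add: max_def)
  hence "dd n * (max (Q PathA V n) (Q PathB V n) - max (Q PathA W n) (Q PathB W n)) \<le> bet PathB * c"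
    using bet[of PathB] assms(2) by (intro mult_dd_le) auto
  thus "Tm V n - Tm W n \<le> bet PathB * c" by (simp add: Tm_def algebra_simps)
qed

lemma rhoB: "0 \<le> bet PathB" "bet PathB < 1" using bet[of PathB] by auto

definition Vs :: "nat \<Rightarrow> real" where "Vs = (SOME L. \<forall>n<B. Tm L n = L n)"

lemma Vs_fix: "\<forall>n<B. Tm Vs n = Vs n"
proof -
  have "\<exists>L. \<forall>n<B. Tm L n = L n"
    using contraction_fix[where F=Tm and B=B, OF rhoB Tm_contr] by blast
  thus ?thesis unfolding Vs_def by (rule someI_ex)
qed

definition Qm where "Qm n = max (Q PathA Vs n) (Q PathB Vs n)"

lemma Vs_eq: "n < B \<Longrightarrow> Vs n = dd n * Qm n"
  using Vs_fix by (simp add: Tm_def Qm_def)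

lemma Vs_pos_eq: "n < B \<Longrightarrow> 1 \<le> n \<Longrightarrow> Vs n = Qm n"
  using Vs_eq by (simp add: dd_eq)

lemma Q_le_Qm: "Q u Vs n \<le> Qm n" by (cases u) (auto simp: Qm_def)
lemma Qm_attained: "\<exists>u. Q u Vs n = Qm n" by (metis Qm_def max_def)

lemma Q01: "Q u V 0 = Q u V 1" by (simp add: Q_def mm_def)

lemma Vs01: "Vs 0 = d0 * Vs 1"
  using Vs_eq[of 0] Vs_eq[of 1] B2 Q01 by (simp add: dd_eq Qm_def)

lemma Vs_nonneg: "n < B \<Longrightarrow> 0 \<le> Vs n"
proof -
  obtain n0 where n0: "n0 < B" "\<forall>j<B. Vs n0 \<le> Vs j" using exists_min_idx[of B Vs] B1 by auto
  have "0 \<le> Vs n0"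
  proof (rule ccontr)
    assume neg: "\<not> 0 \<le> Vs n0"
    have mb: "\<bar>Vs n0\<bar> \<le> (\<Sum>j<B. \<bar>Vs j\<bar>)"
      using n0 by (intro member_le_sum[where f = "\<lambda>j. \<bar>Vs j\<bar>", simplified]) auto
    have "(\<Sum>k. w PathA k * Vs n0) \<le> (\<Sum>k. w PathA k * Vs (min (mm n0 + k) B - 1))"
      by (rule wsum_le[where M = "(\<Sum>j<B. \<bar>Vs j\<bar>)"])
         (use n0 B1 idx_bound[of Vs] mb in auto)
    hence "bet PathA * Vs n0 \<le> G PathA Vs (mm n0)" by (simp add: wsum_const G_def)
    hence "bet PathA * Vs n0 \<le> Q PathA Vs n0" using r_nonneg[of PathA] by (simp add: Q_def)
    hence "bet PathA * Vs n0 \<le> Qm n0" using Q_le_Qm[of PathA n0] by linarith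
    hence "dd n0 * (bet PathA * Vs n0) \<le> Vs n0" using Vs_eq[OF n0(1)] dd[of n0]
      by (simp add: mult_left_mono)
    moreover have "dd n0 * bet PathA < 1"
    proof -
      have "dd n0 * bet PathA \<le> bet PathA" using dd[of n0] bet[of PathA] by (intro mult_left_le_one_le) auto
      thus ?thesis using bet[of PathA] by linarith
    qed
    hence "1 * Vs n0 < (dd n0 * bet PathA) * Vs n0" using neg by (intro mult_strict_right_mono_neg) auto
    ultimately show False by (simp add: mult_ac)
  qed
  thus "n < B \<Longrightarrow> 0 \<le> Vs n" using n0 by force
qed

definition Dl :: "(nat \<Rightarrow> real) \<Rightarrow> nat \<Rightarrow> real" where
  "Dl V i = V (min (Suc i) B - 1) - V (min i B - 1)"

lemma Dl_eq: "Dl V i = (if 0 < i \<and> i < B then V i - V (i - 1) else 0)"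
  unfolding Dl_def by (auto simp: min_def)

lemma Dl_bound: "\<bar>Dl (V::nat\<Rightarrow>real) i\<bar> \<le> 2 * (\<Sum>j<B. \<bar>V j\<bar>)"
  using idx_bound[of V "Suc i"] idx_bound[of V i] unfolding Dl_def by linarith

lemma G_shift: "G u V (Suc m) - G u V m = (\<Sum>k. w u k * Dl V (m + k))"
  unfolding G_def suminf_diff[OF G_summable G_summable] by (simp add: Dl_def right_diff_distrib)

lemma wsum_Dl_summable: "summable (\<lambda>k. w u k * Dl V (m + k))"
  by (rule wsum_summable[OF Dl_bound])

lemma Dl_nonneg: "0 \<le> Dl Vs i"
proof -
  obtain n0 where n0: "n0 < B - 1" "\<forall>j<B - 1. Dl Vs (Suc n0) \<le> Dl Vs (Suc j)"
    using exists_min_idx[of "B - 1" "\<lambda>j. Dl Vs (Suc j)"] B2 by auto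
  define n where "n = Suc n0"
  have n: "1 \<le> n" "n < B" using n0 B2 by (auto simp: n_def)
  have minall: "\<forall>i. Dl Vs i < 0 \<longrightarrow> Dl Vs n \<le> Dl Vs i"
  proof (intro allI impI)
    fix i assume "Dl Vs i < 0"
    hence "0 < i" "i < B" by (auto simp: Dl_eq split: if_splits)
    then obtain j where "i = Suc j" "j < B - 1" by (metis Suc_pred less_diff_conv2 not_less_eq_eq Suc_le_eq B1 add.commute plus_1_eq_Suc)
    thus "Dl Vs n \<le> Dl Vs i" using n0 by (simp add: n_def)
  qed
  have "0 \<le> Dl Vs n"
  proof (rule ccontr)
    assume neg: "\<not> 0 \<le> Dl Vs n"
    have ge: "Dl Vs n \<le> Dl Vs i" for i
    proof (cases "Dl Vs i < 0")
      case True thus ?thesis using minall by blast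
    next
      case False thus ?thesis using neg by linarith
    qed
    have "n \<noteq> 1"
    proof
      assume "n = 1"
      hence "Dl Vs n = (1 - d0) * Vs 1" using B2 by (simp add: Dl_eq Vs01 algebra_simps)
      moreover have "0 \<le> (1 - d0) * Vs 1" using d0 Vs_nonneg[of 1] B2 by simp
      ultimately show False using neg by simp
    qed
    hence n2: "2 \<le> n" using n by simp
    define n' where "n' = n - 1"
    have n': "1 \<le> n'" "n' < B" "n = Suc n'" using n n2 by (auto simp: n'_def)
    obtain u where u: "Q u Vs n' = Qm n'" using Qm_attained by blast
    have "Dl Vs n = Vs n - Vs n'" using n' n by (simp add: Dl_eq)
    also have "\<dots> \<ge> Q u Vs n - Q u Vs n'"
      using Vs_pos_eq[of n] Vs_pos_eq[of n'] n n' u Q_le_Qm[of u n] by simp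
    finally have "Q u Vs (Suc n') - Q u Vs n' \<le> Dl Vs n" using n' by simp
    moreover have "Q u Vs (Suc n') - Q u Vs n' = (\<Sum>k. w u k * Dl Vs (n' + k))"
      using n' G_shift[of u Vs n'] by (simp add: Q_def mm_def)
    moreover have "(\<Sum>k. w u k * Dl Vs n) \<le> (\<Sum>k. w u k * Dl Vs (n' + k))"
      by (rule wsum_le[where M = "2 * (\<Sum>j<B. \<bar>Vs j\<bar>)"]) (use ge Dl_bound in auto)
    moreover have "(\<Sum>k. w u k * Dl Vs n) = bet u * Dl Vs n" by (rule wsum_const)
    ultimately have "bet u * Dl Vs n \<le> Dl Vs n" by linarith
    moreover have "1 * Dl Vs n < bet u * Dl Vs n"
      using neg bet[of u] by (intro mult_strict_right_mono_neg) auto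
    ultimately show False by simp
  qed
  thus ?thesis using minall by (meson linorder_not_le order.trans)
qed

lemma Dl_conc_aux: "B - i = s \<Longrightarrow> 1 \<le> i \<Longrightarrow> Dl Vs (i + k) \<le> Dl Vs i"
proof (induction s arbitrary: i k)
  case 0
  thus ?case by (simp add: Dl_eq)
next
  case (Suc s)
  have iB: "i < B" using Suc.prems by simp
  have IH: "Dl Vs (Suc i + k) \<le> Dl Vs (Suc i)" for k
    using Suc.IH[of "Suc i" k] Suc.prems by simp
  have key: "Dl Vs (Suc i) \<le> Dl Vs i"
  proof (rule ccontr)
    assume "\<not> Dl Vs (Suc i) \<le> Dl Vs i"
    hence lt: "Dl Vs i < Dl Vs (Suc i)" by simp
    have pos: "0 < Dl Vs (Suc i)" using lt Dl_nonneg[of i] by linarith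
    hence SiB: "Suc i < B" by (simp add: Dl_eq split: if_splits)
    obtain u where u: "Q u Vs (Suc i) = Qm (Suc i)" using Qm_attained by blast
    have "Dl Vs (Suc i) = Vs (Suc i) - Vs i" using SiB by (simp add: Dl_eq)
    also have "\<dots> \<le> Q u Vs (Suc i) - Q u Vs i"
      using Vs_pos_eq[of "Suc i"] Vs_pos_eq[of i] SiB iB Suc.prems u Q_le_Qm[of u i] by simp
    also have "\<dots> = (\<Sum>k. w u k * Dl Vs (i + k))"
      using Suc.prems G_shift[of u Vs i] by (simp add: Q_def mm_def)
    also have "\<dots> \<le> (\<Sum>k. w u k * Dl Vs (Suc i))"
    proof (rule wsum_le[where M = "2 * (\<Sum>j<B. \<bar>Vs j\<bar>)"])
      show "Dl Vs (i + k) \<le> Dl Vs (Suc i)" for k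
        using lt IH[of "k - 1"] by (cases k) auto
    qed (use Dl_bound in auto)
    also have "\<dots> = bet u * Dl Vs (Suc i)" by (rule wsum_const)
    finally have "Dl Vs (Suc i) \<le> bet u * Dl Vs (Suc i)" .
    moreover have "bet u * Dl Vs (Suc i) < 1 * Dl Vs (Suc i)"
      using pos bet[of u] by (intro mult_strict_right_mono) auto
    ultimately show False by simp
  qed
  show ?case
  proof (cases k)
    case 0 thus ?thesis by simp
  next
    case (Suc k') thus ?thesis using IH[of k'] key by simp
  qed
qed

lemma Dl_conc: "1 \<le> i \<Longrightarrow> Dl Vs (Suc i) \<le> Dl Vs i"
  using Dl_conc_aux[of i "B - i" 1] by simp

end



context qsetting begin

lemma bet_alt: "mu u / cc u / (1 - qq u) = bet u"
proof -
  have "1 - qq u = (mu u + gam) / cc u" using cc_pos[of u] by (simp add: qq_def cc_def field_simps)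
  thus ?thesis using cc_pos[of u] gam mu_pos[of u] by (simp add: bet_def)
qed

lemma w_partial: "(\<Sum>i<K. w u i) = bet u * (1 - qq u ^ K)"
proof -
  have "(\<Sum>i<K. w u i) = (mu u / cc u) * (\<Sum>i<K. qq u ^ i)" by (simp add: w_eq sum_distrib_left)
  also have "\<dots> = (mu u / cc u) * ((1 - qq u ^ K) / (1 - qq u))"
    using qq[of u] by (simp add: sum_gp_strict)
  also have "\<dots> = (mu u / cc u / (1 - qq u)) * (1 - qq u ^ K)" by simp
  finally show ?thesis by (simp only: bet_alt)
qed

lemma partial_AB: "(\<Sum>i<K. w PathA i - w PathB i) \<le> 0"
proof -
  have qAB: "qq PathB \<le> qq PathA"
    using lam muAB cc_pos[of PathA] by (simp add: qq_def cc_def divide_left_mono)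
  have "qq PathB ^ K \<le> qq PathA ^ K" using qAB qq by (intro power_mono) (auto intro: less_imp_le)
  moreover have "qq PathA ^ K \<le> 1" using qq[of PathA] by (simp add: power_le_one)
  ultimately have "bet PathA * (1 - qq PathA ^ K) \<le> bet PathB * (1 - qq PathB ^ K)"
    using betAB bet[of PathA] by (intro mult_mono) auto
  thus ?thesis by (simp add: sum_subtractf w_partial)
qed

lemma wsum_Dl_finite: "1 \<le> n \<Longrightarrow> (\<Sum>k. w u k * Dl V (n + k)) = (\<Sum>k<B. w u k * Dl V (n + k))"
  by (rule suminf_finite) (auto simp: Dl_eq)

definition DD where "DD n = Q PathA Vs n - Q PathB Vs n"

lemma DD_step: "DD (Suc n) \<le> DD n"
proof (cases "n = 0")
  case True thus ?thesis using Q01 by (simp add: DD_def)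
next
  case False
  hence n1: "1 \<le> n" by simp
  define x where "x k = Dl Vs (n + k)" for k
  define f where "f k = w PathA k - w PathB k" for k
  have "DD (Suc n) - DD n = (G PathA Vs (Suc n) - G PathA Vs n) - (G PathB Vs (Suc n) - G PathB Vs n)"
    using n1 by (simp add: DD_def Q_def mm_def)
  also have "\<dots> = (\<Sum>k<B. w PathA k * x k) - (\<Sum>k<B. w PathB k * x k)"
    using n1 by (simp add: G_shift wsum_Dl_finite x_def)
  also have "\<dots> = (\<Sum>k<B. f k * x k)" by (simp add: f_def sum_subtractf left_diff_distrib)
  also have "\<dots> = (\<Sum>k<B. (\<Sum>i<Suc k. f i) * (x k - x (Suc k))) + (\<Sum>i<B. f i) * x B"
    by (rule abel_sum)
  also have "x B = 0" by (simp add: x_def Dl_eq)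
  also have "(\<Sum>k<B. (\<Sum>i<Suc k. f i) * (x k - x (Suc k))) \<le> 0"
  proof (rule sum_nonpos)
    fix k
    have "(\<Sum>i<Suc k. f i) \<le> 0" using partial_AB[of "Suc k"] by (simp only: f_def)
    moreover have "0 \<le> x k - x (Suc k)" using Dl_conc[of "n + k"] n1 by (simp add: x_def)
    ultimately show "(\<Sum>i<Suc k. f i) * (x k - x (Suc k)) \<le> 0" by (rule mult_nonpos_nonneg)
  qed
  finally show ?thesis by simp
qed

lemma DD_mono: "n \<le> n' \<Longrightarrow> DD n' \<le> DD n"
  using lift_Suc_antimono_le[of DD, OF DD_step] by blast

definition tt where "tt = (if \<forall>n<B. 0 \<le> DD n then B else (LEAST n. DD n < 0))"

lemma tt_le: "tt \<le> B"
proof (cases "\<forall>n<B. 0 \<le> DD n")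
  case True thus ?thesis by (simp add: tt_def)
next
  case False
  then obtain n where "n < B" "DD n < 0" by auto
  hence "(LEAST n. DD n < 0) \<le> n" by (intro Least_le)
  thus ?thesis using False \<open>n < B\<close> by (simp add: tt_def)
qed

lemma tt_iff: "n < B \<Longrightarrow> (n < tt \<longleftrightarrow> 0 \<le> DD n)"
proof (cases "\<forall>n<B. 0 \<le> DD n")
  case True
  assume "n < B" thus ?thesis using True by (simp add: tt_def)
next
  case False
  assume nB: "n < B"
  from False obtain m where "DD m < 0" by (auto simp: not_le)
  hence L: "DD (LEAST n. DD n < 0) < 0" by (rule LeastI)
  have tt: "tt = (LEAST n. DD n < 0)" using False unfolding tt_def by (rule if_not_P)
  show ?thesis
  proof
    assume "n < tt"
    thus "0 \<le> DD n" unfolding tt using not_less_Least by (metis linorder_not_le)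
  next
    assume "0 \<le> DD n"
    show "n < tt"
    proof (rule ccontr)
      assume "\<not> n < tt"
      hence "DD n \<le> DD tt" by (intro DD_mono) simp
      thus False using L \<open>0 \<le> DD n\<close> tt by simp
    qed
  qed
qed

definition polS :: "nat \<Rightarrow> path" where "polS n = (if n < tt then PathA else PathB)"

lemma polS_max: "n < B \<Longrightarrow> Q (polS n) Vs n = Qm n"
  using tt_iff[of n] by (auto simp: polS_def Qm_def DD_def max_def)

lemma bp_polS: "\<forall>n<B. bellman_pol lam gam mu p B polS Vs n = Vs n"
  by (simp add: bp_eq polS_max Vs_eq)

lemma bp_le: "\<forall>n<B. bellman_pol lam gam mu p B pol Vs n \<le> Vs n"
  using dd Q_le_Qm by (simp add: bp_eq Vs_eq mult_left_mono less_imp_le)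

lemma pv_fix: "\<exists>L. (\<forall>n<B. policy_value lam gam mu p B pol n = L n) \<and>
                   (\<forall>n<B. bellman_pol lam gam mu p B pol L n = L n)"
proof -
  obtain L where L: "\<forall>n<B. (\<lambda>k. ((bellman_pol lam gam mu p B pol) ^^ k) (\<lambda>_. 0) n) \<longlonglongrightarrow> L n"
    "\<forall>n<B. bellman_pol lam gam mu p B pol L n = L n"
    using contraction_fix[where F="bellman_pol lam gam mu p B pol" and B=B, OF rhoB bp_contr] by blast
  have "\<forall>n<B. policy_value lam gam mu p B pol n = L n"
    using L(1) unfolding policy_value_def by (auto intro: limI)
  thus ?thesis using L(2) by blast
qed

lemma pv_polS: "n < B \<Longrightarrow> policy_value lam gam mu p B polS n = Vs n"
proof -
  obtain L where L: "\<forall>n<B. policy_value lam gam mu p B polS n = L n"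
    "\<forall>n<B. bellman_pol lam gam mu p B polS L n = L n" using pv_fix by blast
  have "\<forall>n<B. L n = Vs n"
    by (rule contraction_uniq[where F="bellman_pol lam gam mu p B polS" and B=B, OF rhoB bp_contr L(2) bp_polS])
  thus "n < B \<Longrightarrow> ?thesis" using L(1) by simp
qed

lemma pv_le: "n < B \<Longrightarrow> policy_value lam gam mu p B pol n \<le> Vs n"
proof -
  obtain L where L: "\<forall>n<B. policy_value lam gam mu p B pol n = L n"
    "\<forall>n<B. bellman_pol lam gam mu p B pol L n = L n" using pv_fix by blast
  have "\<forall>n<B. L n \<le> Vs n"
    by (rule contraction_cmp[where F="bellman_pol lam gam mu p B pol" and B=B, OF rhoB bp_contr L(2) bp_le])
  thus "n < B \<Longrightarrow> ?thesis" using L(1) by simp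
qed

lemma polS_optimal: "optimal_policy lam gam mu p B polS"
  unfolding optimal_policy_def using pv_le pv_polS by simp

lemma polS_thr: "\<exists>!t. t \<le> B \<and> (\<forall>n<B. polS n = (if n < t then PathA else PathB))"
proof (rule ex1I[of _ tt])
  show "tt \<le> B \<and> (\<forall>n<B. polS n = (if n < tt then PathA else PathB))" using tt_le by (simp add: polS_def)
next
  fix t assume t: "t \<le> B \<and> (\<forall>n<B. polS n = (if n < t then PathA else PathB))"
  show "t = tt"
  proof (rule ccontr)
    assume "t \<noteq> tt"
    hence "t < tt \<or> tt < t" by auto
    thus False
    proof
      assume a: "t < tt"
      hence "t < B" using tt_le by simp
      hence "polS t = PathB" using t by simp
      thus False using a by (simp add: polS_def)
    next
      assume a: "tt < t"
      hence "tt < B" using t by simp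
      hence "polS tt = PathA" using t a by simp
      thus False by (simp add: polS_def)
    qed
  qed
qed

end


theorem theorem1:
  fixes lam gam :: real and mu p :: "path \<Rightarrow> real" and B :: nat
  assumes "lam > 0" and "gam > 0" and "B \<ge> 2"
    and "0 < mu PathA" and "mu PathA < mu PathB"
    and "0 \<le> p PathA" and "p PathA < p PathB" and "p PathB \<le> 1"
  shows "\<exists>pol. optimal_policy lam gam mu p B pol \<and>
           (\<exists>!t. t \<le> B \<and> (\<forall>n<B. pol n = (if n < t then PathA else PathB)))"
proof -
  interpret qsetting lam gam mu p B
    using assms by unfold_locales
  show ?thesis using polS_optimal polS_thr by blast
qed

end
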